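(* Let $k\ge 2$ be an integer, and let $\alpha>1$ and $C>0$ be real numbers. Let $D:=\{z\in\mathbb{C}: |z|<2\}$. Then there exists a sequence $\{f_n\}_n$ of functions holomorphic in $D$ such that $$\frac{|f_n^{(k)}(z)|}{1+|f_n(z)|^\alpha}\le C \qquad\text{for all } z\in D \text{ and all } n,$$ but $\{f_n\}_n$ is not quasi-normal in $D$.
   Context: A family $\mathcal{F}$ of meromorphic functions in a domain $D\subseteq\mathbb{C}$ is called quasi-normal if from each sequence $\{f_n\}_n$ in $\mathcal{F}$ one can extract a subsequence which converges locally uniformly (with respect to the spherical metric, the limit $\infty$ being allowed) on $D\setminus E$, where the set $E$ (which may depend on the sequence) has no accumulation point in $D$. A sequence is called quasi-normal if the family of its members is quasi-normal. *)

theory Defs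
  imports "HOL-Analysis.Analysis"
begin

text \<open>Points of the Riemann sphere: Some z is the finite point z, None is infinity.
  The chordal (spherical) metric on the Riemann sphere.\<close>
fun chordal :: "complex option \<Rightarrow> complex option \<Rightarrow> real" where
  "chordal (Some a) (Some b) = cmod (a - b) / (sqrt (1 + (cmod a)^2) * sqrt (1 + (cmod b)^2))"
| "chordal (Some a) None = 1 / sqrt (1 + (cmod a)^2)"
| "chordal None (Some b) = 1 / sqrt (1 + (cmod b)^2)"
| "chordal None None = 0"

definition sph_loc_unif_conv ::
  "(nat \<Rightarrow> complex \<Rightarrow> complex option) \<Rightarrow> (complex \<Rightarrow> complex option) \<Rightarrow> complex set \<Rightarrow> bool" where
  "sph_loc_unif_conv g h S \<longleftrightarrow>
     (\<forall>K. compact K \<and> K \<subseteq> S \<longrightarrow>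
        (\<forall>e>0. \<forall>\<^sub>F n in sequentially. \<forall>z\<in>K. chordal (g n z) (h z) < e))"

definition quasi_normal :: "(complex \<Rightarrow> complex) set \<Rightarrow> complex set \<Rightarrow> bool" where
  "quasi_normal F D \<longleftrightarrow>
     (\<forall>f::nat \<Rightarrow> complex \<Rightarrow> complex. (\<forall>n. f n \<in> F) \<longrightarrow>
        (\<exists>r E h. strict_mono r \<and> (\<forall>z\<in>D. \<not> z islimpt E) \<and>
           sph_loc_unif_conv (\<lambda>n z. Some (f (r n) z)) h (D - E)))"

end

theory Submission
  imports Defs "HOL-Complex_Analysis.Complex_Analysis"
begin

definition Ps :: "nat \<Rightarrow> complex \<Rightarrow> complex \<Rightarrow> complex" where
  "Ps s b x = sin x * exp (b * (sin x) ^ (2 * s))"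

definition FS :: "nat \<Rightarrow> complex \<Rightarrow> complex fps" where
  "FS s b = fps_sin 1 * (fps_exp 1 oo (fps_const b * fps_sin 1 ^ (2 * s)))"

lemma Ps_fps:
  assumes "s \<ge> 1"
  shows "Ps s b has_fps_expansion FS s b"
proof -
  have G: "(\<lambda>x. b * sin x ^ (2 * s)) has_fps_expansion fps_const b * fps_sin 1 ^ (2 * s)"
    by (intro fps_expansion_intros)
  have G0: "fps_nth (fps_const b * fps_sin (1::complex) ^ (2 * s)) 0 = 0"
    using assms by (simp add: fps_nth_power_0)
  have "(exp \<circ> (\<lambda>x. b * sin x ^ (2 * s))) has_fps_expansion (fps_exp 1 oo (fps_const b * fps_sin 1 ^ (2 * s)))"
    by (rule has_fps_expansion_compose[OF has_fps_expansion_exp1 G G0])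
  hence "(\<lambda>x. sin x * (exp \<circ> (\<lambda>x. b * sin x ^ (2 * s))) x) has_fps_expansion FS s b"
    unfolding FS_def by (rule has_fps_expansion_mult[OF has_fps_expansion_sin'])
  thus ?thesis by (simp add: Ps_def[abs_def] o_def)
qed

lemma sin_fps_factor: "fps_sin (1::complex) = fps_X * fps_shift 1 (fps_sin 1)"
proof -
  have "1 \<le> subdegree (fps_sin (1::complex))"
  proof (rule subdegree_geI)
    show "fps_sin (1::complex) \<noteq> 0"
    proof
      assume "fps_sin (1::complex) = 0"
      hence "fps_sin (1::complex) $ Suc 0 = 0" by simp
      thus False by simp
    qed
  qed auto
  from fps_shift_times_fps_X[OF this] show ?thesis by (simp add: mult.commute)
qed

lemma fps_sin_shift0: "fps_shift 1 (fps_sin (1::complex)) $ 0 = 1"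
  by simp

lemma G_power_nth:
  "((fps_const b * fps_sin (1::complex) ^ (2 * s)) ^ i) $ m =
     b ^ i * (if m < 2 * s * i then 0 else (fps_shift 1 (fps_sin 1) ^ (2 * s * i)) $ (m - 2 * s * i))"
proof -
  have "(fps_const b * fps_sin (1::complex) ^ (2 * s)) ^ i
        = fps_const (b ^ i) * (fps_X ^ (2 * s * i) * fps_shift 1 (fps_sin 1) ^ (2 * s * i))"
    by (subst sin_fps_factor) (simp add: power_mult_distrib power_mult[symmetric] mult.assoc)
  thus ?thesis by (simp add: fps_X_power_mult_nth)
qed

lemma E_nth:
  "(fps_exp 1 oo (fps_const b * fps_sin (1::complex) ^ (2 * s))) $ m =
    (\<Sum>i=0..m. 1 / of_nat (fact i) * (b ^ i * (if m < 2 * s * i then 0 else (fps_shift 1 (fps_sin 1) ^ (2 * s * i)) $ (m - 2 * s * i))))"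
  by (simp add: fps_compose_nth G_power_nth)

lemma E_nth_low:
  assumes "1 \<le> m" "m < 2 * s"
  shows "(fps_exp 1 oo (fps_const b * fps_sin (1::complex) ^ (2 * s))) $ m = 0"
proof -
  have *: "\<And>i. i \<in> {0..m} \<Longrightarrow> 1 / of_nat (fact i) * (b ^ i * (if m < 2 * s * i then 0 else (fps_shift 1 (fps_sin (1::complex)) ^ (2 * s * i)) $ (m - 2 * s * i))) = 0"
  proof -
    fix i assume "i \<in> {0..m}"
    show "?thesis i"
    proof (cases i)
      case 0 thus ?thesis using assms by simp
    next
      case (Suc j)
      have "2 * s \<le> 2 * s * i" using Suc by simp
      hence "m < 2 * s * i" using assms by linarith
      thus ?thesis by simp
    qed
  qed
  show ?thesis unfolding E_nth by (rule sum.neutral) (use * in blast)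
qed

lemma E_nth_0: "(fps_exp 1 oo (fps_const b * fps_sin (1::complex) ^ (2 * s))) $ 0 = 1"
  by simp

lemma E_nth_2s:
  assumes "s \<ge> 1"
  shows "(fps_exp 1 oo (fps_const b * fps_sin (1::complex) ^ (2 * s))) $ (2 * s) = b"
proof -
  have "\<And>i. i \<in> {0..2 * s} \<Longrightarrow> 1 / of_nat (fact i) * (b ^ i * (if 2 * s < 2 * s * i then 0 else (fps_shift 1 (fps_sin (1::complex)) ^ (2 * s * i)) $ (2 * s - 2 * s * i))) = (if i = 1 then b else 0)"
  proof -
    fix i assume "i \<in> {0..2 * s}"
    show "?thesis i"
    proof (cases "i = 0")
      case True thus ?thesis using assms by simp
    next
      case False
      show ?thesis
      proof (cases "i = 1")
        case True thus ?thesis by (simp add: fps_nth_power_0)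
      next
        case False
        with \<open>i \<noteq> 0\<close> have "i \<ge> 2" by simp
        hence "2 * s * 2 \<le> 2 * s * i" by simp
        hence "2 * s < 2 * s * i" using assms by linarith
        thus ?thesis using False by simp
      qed
    qed
  qed
  hence "(\<Sum>i=0..2 * s. 1 / of_nat (fact i) * (b ^ i * (if 2 * s < 2 * s * i then 0 else (fps_shift 1 (fps_sin (1::complex)) ^ (2 * s * i)) $ (2 * s - 2 * s * i)))) = (\<Sum>i=0..2 * s. (if i = 1 then b else 0))"
    by (rule sum.cong[OF refl])
  also have "\<dots> = b" using assms by (simp add: sum.delta)
  finally show ?thesis by (simp add: E_nth)
qed

lemma FS_nth_odd:
  assumes "s \<ge> 1"
  shows "FS s b $ (2 * s + 1) = fps_sin 1 $ (2 * s + 1) + b"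
proof -
  let ?E = "fps_exp 1 oo (fps_const b * fps_sin (1::complex) ^ (2 * s))"
  have "\<And>j. j \<in> {0..2 * s + 1} \<Longrightarrow> fps_sin 1 $ j * ?E $ (2 * s + 1 - j) =
       (if j = 1 then b else 0) + (if j = 2 * s + 1 then fps_sin 1 $ (2 * s + 1) else 0)"
  proof -
    fix j assume j: "j \<in> {0..2 * s + 1}"
    consider "j = 0" | "j = 1" | "j = 2 * s + 1" | "2 \<le> j \<and> j \<le> 2 * s" using j by force
    thus "?thesis j"
    proof cases
      case 1 thus ?thesis by simp
    next
      case 2 thus ?thesis using assms E_nth_2s[OF assms, of b] by simp
    next
      case 3 thus ?thesis using assms by simp
    next
      case 4
      hence "?E $ (2 * s + 1 - j) = 0" by (intro E_nth_low) auto
      thus ?thesis using 4 by auto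
    qed
  qed
  hence "FS s b $ (2 * s + 1) = (\<Sum>j=0..2 * s + 1. (if j = 1 then b else 0) + (if j = 2 * s + 1 then fps_sin 1 $ (2 * s + 1) else 0))"
    unfolding FS_def fps_mult_nth by (rule sum.cong[OF refl])
  also have "\<dots> = b + fps_sin 1 $ (2 * s + 1)"
    by (simp add: sum.distrib sum.delta)
  finally show ?thesis by simp
qed

lemma FS_nth_1: "FS s b $ 1 = 1"
  by (simp add: FS_def fps_mult_nth_1)

lemma Ps_holo [holomorphic_intros]: "Ps s b holomorphic_on A"
  unfolding Ps_def[abs_def] by (intro holomorphic_intros)

lemma Ps_higher_holo: "(deriv ^^ n) (Ps s b) holomorphic_on A"
  by (rule holomorphic_on_subset[OF holomorphic_higher_deriv[OF Ps_holo[of s b UNIV] open_UNIV]]) auto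

lemma Ps_hderiv0:
  assumes "s \<ge> 1"
  shows "(deriv ^^ n) (Ps s b) 0 = FS s b $ n * fact n"
  using fps_nth_fps_expansion[OF Ps_fps[OF assms, of b], of n] by simp

lemma Ps_odd: "Ps s b (- x) = - Ps s b x"
  by (simp add: Ps_def power_mult)

lemma Ps_hderiv0_even:
  assumes "even n"
  shows "(deriv ^^ n) (Ps s b) 0 = 0"
proof -
  have "(deriv ^^ n) (\<lambda>w. Ps s b ((-1) * w)) 0 = (-1) ^ n * (deriv ^^ n) (Ps s b) ((-1) * 0)"
    by (rule higher_deriv_compose_linear[OF Ps_holo[of s b UNIV] open_UNIV open_UNIV]) auto
  also have "\<dots> = (deriv ^^ n) (Ps s b) 0" using assms by simp
  finally have 1: "(deriv ^^ n) (\<lambda>w. Ps s b ((-1) * w)) 0 = (deriv ^^ n) (Ps s b) 0" .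
  have "(deriv ^^ n) (\<lambda>w. Ps s b ((-1) * w)) 0 = (deriv ^^ n) (\<lambda>w. - Ps s b w) 0"
    by (simp add: Ps_odd)
  also have "\<dots> = - (deriv ^^ n) (Ps s b) 0"
    by (rule higher_deriv_uminus[OF Ps_holo[of s b UNIV]]) auto
  finally show ?thesis using 1 by simp
qed

definition bb :: "nat \<Rightarrow> complex" where "bb s = - (fps_sin 1 $ (2 * s + 1))"

definition Psi :: "nat \<Rightarrow> complex \<Rightarrow> complex" where "Psi k = Ps (k div 2) (bb (k div 2))"

lemma Psi_holo [holomorphic_intros]: "Psi k holomorphic_on A"
  unfolding Psi_def by (rule Ps_holo)

lemma Psi_higher_holo: "(deriv ^^ n) (Psi k) holomorphic_on A"
  unfolding Psi_def by (rule Ps_higher_holo)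

lemma Psi_hderiv_k:
  assumes "k \<ge> 2"
  shows "(deriv ^^ k) (Psi k) 0 = 0" "(deriv ^^ (Suc k)) (Psi k) 0 = 0"
proof -
  define s where "s = k div 2"
  have s1: "s \<ge> 1" using assms by (simp add: s_def)
  have "(deriv ^^ (2 * s + 1)) (Ps s (bb s)) 0 = FS s (bb s) $ (2 * s + 1) * fact (2 * s + 1)"
    by (rule Ps_hderiv0[OF s1])
  also have "FS s (bb s) $ (2 * s + 1) = 0"
    using FS_nth_odd[OF s1, of "bb s"] by (simp add: bb_def)
  finally have odd0: "(deriv ^^ (2 * s + 1)) (Psi k) 0 = 0"
    unfolding Psi_def s_def[symmetric] by simp
  have "k = 2 * s \<or> k = 2 * s + 1" by (auto simp: s_def)
  thus "(deriv ^^ k) (Psi k) 0 = 0" "(deriv ^^ (Suc k)) (Psi k) 0 = 0"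
    using odd0 Ps_hderiv0_even[of k "k div 2" "bb (k div 2)"] Ps_hderiv0_even[of "Suc k" "k div 2" "bb (k div 2)"]
    unfolding Psi_def s_def[symmetric] by (auto simp del: funpow.simps)
qed

lemma Psi_0: "Psi k 0 = 0" by (simp add: Psi_def Ps_def)

lemma Psi_deriv0:
  assumes "k \<ge> 2"
  shows "deriv (Psi k) 0 = 1"
proof -
  have s1: "k div 2 \<ge> 1" using assms by simp
  show ?thesis using Ps_hderiv0[OF s1, of 1] FS_nth_1 unfolding Psi_def by simp
qed

lemma cos_sq_when_sin0:
  fixes c :: complex assumes "sin c = 0" shows "cos c ^ 2 = 1"
  using sin_squared_eq[of c] assms by simp

lemma Ps_shift_gen:
  fixes c :: complex assumes s0: "sin c = 0"
  shows "Ps s b (w + c) = cos c * Ps s b w"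
proof -
  have c2: "cos c ^ 2 = 1" by (rule cos_sq_when_sin0[OF s0])
  have "cos c ^ (2 * s) = 1"
    by (simp add: power_mult c2)
  hence "sin (w + c) ^ (2 * s) = sin w ^ (2 * s)"
    by (simp add: sin_add s0 power_mult_distrib)
  thus ?thesis by (simp add: Ps_def sin_add s0)
qed

lemma sin_jpi: "sin (of_real (of_int j * pi) :: complex) = 0"
  by (subst sin_eq_0) auto

lemma cos_norm_when_sin0:
  fixes c :: complex assumes "sin c = 0" shows "cmod (cos c) = 1"
proof -
  have "cmod (cos c) ^ 2 = 1" using cos_sq_when_sin0[OF assms] by (metis norm_one norm_power)
  thus ?thesis by (simp add: power2_eq_1_iff) (use norm_ge_zero[of "cos c"] in linarith)
qed

lemma Psi_shift_hderiv:
  fixes c :: complex assumes s0: "sin c = 0"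
  shows "(deriv ^^ n) (Psi k) (t + c) = cos c * (deriv ^^ n) (Psi k) t"
proof -
  have "(deriv ^^ n) (\<lambda>w. Psi k (1 * w + c)) t = 1 ^ n * (deriv ^^ n) (Psi k) (1 * t + c)"
    by (rule higher_deriv_compose_linear'[OF Psi_holo[of k UNIV] open_UNIV open_UNIV]) auto
  hence "(deriv ^^ n) (Psi k) (t + c) = (deriv ^^ n) (\<lambda>w. Psi k (w + c)) t" by simp
  also have "(\<lambda>w. Psi k (w + c)) = (\<lambda>w. cos c * Psi k w)"
    by (simp add: Psi_def Ps_shift_gen[OF s0])
  also have "(deriv ^^ n) (\<lambda>w. cos c * Psi k w) t = cos c * (deriv ^^ n) (Psi k) t"
    by (rule higher_deriv_cmult[OF Psi_holo[of k UNIV]]) auto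
  finally show ?thesis .
qed

lemma Psi_shift: "sin c = 0 \<Longrightarrow> Psi k (t + c) = cos c * Psi k t"
  by (simp add: Psi_def Ps_shift_gen)

lemma Psi_zero_iff: "Psi k w = 0 \<longleftrightarrow> (\<exists>j::int. w = of_real (j * pi))"
  by (simp add: Psi_def Ps_def sin_eq_0)

lemma taylor2:
  assumes g: "g holomorphic_on UNIV"
  shows "\<exists>A\<ge>0. \<forall>t. cmod t \<le> 1 \<longrightarrow> cmod (g t - g 0 - deriv g 0 * t) \<le> A * cmod t ^ 2"
proof -
  have hc: "continuous_on (cball 0 1) ((deriv ^^ 2) g)"
    by (intro holomorphic_on_imp_continuous_on holomorphic_on_subset[OF holomorphic_higher_deriv[OF g open_UNIV]]) auto
  have "bounded ((\<lambda>x. (deriv ^^ 2) g x) ` cball 0 1)"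
    by (intro compact_imp_bounded compact_continuous_image hc) auto
  then obtain A where A: "\<And>x. x \<in> cball 0 1 \<Longrightarrow> cmod ((deriv ^^ 2) g x) \<le> A"
    unfolding bounded_iff by blast
  have "cmod ((deriv ^^ 2) g 0) \<le> A" by (rule A) simp
  hence A0: "A \<ge> 0" by (rule order_trans[OF norm_ge_zero])
  have "cmod ((\<lambda>i. (deriv ^^ i) g) 0 t - (\<Sum>i\<le>1. (\<lambda>i. (deriv ^^ i) g) i 0 * (t - 0) ^ i / fact i)) \<le> A * cmod (t - 0) ^ Suc 1 / fact 1"
    if "cmod t \<le> 1" for t
  proof (rule complex_Taylor[of "cball 0 1"])
    fix i :: nat and x :: complex assume "x \<in> cball (0::complex) 1" "i \<le> 1"
    show "((deriv ^^ i) g has_field_derivative (deriv ^^ Suc i) g x) (at x within cball 0 1)"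
      using has_field_derivative_higher_deriv[OF g open_UNIV, of x i] by (auto intro: has_field_derivative_at_within)
  next
    fix x assume "x \<in> cball (0::complex) 1"
    thus "cmod ((deriv ^^ Suc 1) g x) \<le> A" using A by (simp add: numeral_2_eq_2)
  qed (use that in auto)
  hence "cmod (g t - g 0 - deriv g 0 * t) \<le> A * cmod t ^ 2" if "cmod t \<le> 1" for t
    using that by (simp add: numeral_2_eq_2 algebra_simps)
  with A0 show ?thesis by blast
qed

lemma Psi_key:
  assumes k2: "k \<ge> 2"
  shows "\<exists>M\<ge>0. \<forall>w. cmod w \<le> R \<longrightarrow> cmod ((deriv ^^ k) (Psi k) w) \<le> M * cmod (Psi k w) ^ 2"
proof -
  obtain A where A0: "A \<ge> 0" and A: "\<And>t. cmod t \<le> 1 \<Longrightarrow> cmod ((deriv ^^ k) (Psi k) t) \<le> A * cmod t ^ 2"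
    using taylor2[OF Psi_higher_holo[of k k UNIV]] Psi_hderiv_k[OF k2] by auto
  obtain A' where A'0: "A' \<ge> 0" and A': "\<And>t. cmod t \<le> 1 \<Longrightarrow> cmod (Psi k t - t) \<le> A' * cmod t ^ 2"
    using taylor2[OF Psi_holo[of k UNIV]] Psi_0[of k] Psi_deriv0[OF k2] by auto
  define \<delta> where "\<delta> = 1 / (2 * A' + 2)"
  have d0: "\<delta> > 0" and d1: "\<delta> \<le> 1" using A'0 by (auto simp: \<delta>_def field_simps)
  have lowb: "cmod t \<le> 2 * cmod (Psi k t)" if "cmod t \<le> \<delta>" for t
  proof -
    have t1: "cmod t \<le> 1" using that d1 by simp
    have "A' * cmod t ^ 2 = (A' * cmod t) * cmod t" by (simp add: power2_eq_square)
    also have "A' * cmod t \<le> A' * \<delta>" using that A'0 by (simp add: mult_left_mono)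
    hence "(A' * cmod t) * cmod t \<le> (A' * \<delta>) * cmod t" by (simp add: mult_right_mono)
    also have "A' * \<delta> \<le> 1/2" using A'0 by (simp add: \<delta>_def field_simps)
    hence "(A' * \<delta>) * cmod t \<le> 1/2 * cmod t" by (intro mult_right_mono) auto
    finally have "cmod (Psi k t - t) \<le> cmod t / 2" using A'[OF t1] by simp
    moreover have "cmod t \<le> cmod (Psi k t) + cmod (Psi k t - t)"
      by (metis add.commute diff_add_cancel norm_triangle_ineq4 norm_minus_commute norm_triangle_sub)
    ultimately show ?thesis by simp
  qed
  define Z where "Z = (\<Union>j::int. ball (of_real (of_int j * pi) :: complex) \<delta>)"
  define KS where "KS = cball (0::complex) R - Z"
  have oZ: "open Z" unfolding Z_def by auto
  have cKS: "compact KS" unfolding KS_def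
    by (intro compact_diff oZ) auto
  have nz: "Psi k w \<noteq> 0" if "w \<in> KS" for w
  proof
    assume "Psi k w = 0"
    then obtain j :: int where "w = of_real (j * pi)" by (auto simp: Psi_zero_iff)
    hence "w \<in> Z" using d0 unfolding Z_def by (auto intro!: exI[of _ j])
    thus False using that by (auto simp: KS_def)
  qed
  have "continuous_on KS (\<lambda>w. cmod ((deriv ^^ k) (Psi k) w) / cmod (Psi k w) ^ 2)"
    by (intro continuous_intros holomorphic_on_imp_continuous_on Psi_higher_holo Psi_holo) (use nz in auto)
  hence "bounded ((\<lambda>w. cmod ((deriv ^^ k) (Psi k) w) / cmod (Psi k w) ^ 2) ` KS)"
    by (intro compact_imp_bounded compact_continuous_image cKS)
  then obtain M2 where M2: "\<And>w. w \<in> KS \<Longrightarrow> cmod ((deriv ^^ k) (Psi k) w) / cmod (Psi k w) ^ 2 \<le> M2"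
    by (auto simp: bounded_iff)
  define M where "M = max (4 * A) (max M2 0)"
  have "cmod ((deriv ^^ k) (Psi k) w) \<le> M * cmod (Psi k w) ^ 2" if "cmod w \<le> R" for w
  proof (cases "w \<in> Z")
    case True
    then obtain j :: int where j: "dist (of_real (of_int j * pi)) w < \<delta>" by (auto simp: Z_def)
    define c :: complex where "c = of_real (of_int j * pi)"
    define t where "t = w - c"
    have wt: "w = t + c" by (simp add: t_def)
    have tb: "cmod t \<le> \<delta>" using j by (simp add: t_def c_def dist_norm norm_minus_commute)
    have sc: "sin c = 0" unfolding c_def by (rule sin_jpi)
    have e1: "cmod ((deriv ^^ k) (Psi k) w) = cmod ((deriv ^^ k) (Psi k) t)"
      using Psi_shift_hderiv[OF sc] cos_norm_when_sin0[OF sc] by (simp add: wt norm_mult)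
    have e2: "cmod (Psi k w) = cmod (Psi k t)"
      using Psi_shift[OF sc] cos_norm_when_sin0[OF sc] by (simp add: wt norm_mult)
    have "cmod ((deriv ^^ k) (Psi k) t) \<le> A * cmod t ^ 2" using A tb d1 by simp
    also have "cmod t ^ 2 \<le> (2 * cmod (Psi k t)) ^ 2"
      using lowb[OF tb] by (intro power_mono) auto
    hence "A * cmod t ^ 2 \<le> A * (2 * cmod (Psi k t)) ^ 2" using A0 by (simp add: mult_left_mono)
    also have "\<dots> = (4 * A) * cmod (Psi k t) ^ 2" by (simp add: power2_eq_square)
    also have "\<dots> \<le> M * cmod (Psi k t) ^ 2" by (simp add: M_def mult_right_mono)
    finally show ?thesis using e1 e2 by simp
  next
    case False
    hence w: "w \<in> KS" using that by (simp add: KS_def)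
    have p: "cmod (Psi k w) ^ 2 > 0" using nz[OF w] by simp
    have "cmod ((deriv ^^ k) (Psi k) w) / cmod (Psi k w) ^ 2 \<le> M" using M2[OF w] by (simp add: M_def)
    thus ?thesis using p by (simp add: divide_le_eq)
  qed
  moreover have "M \<ge> 0" by (simp add: M_def)
  ultimately show ?thesis by blast
qed

lemma chordal_contra:
  assumes h1: "chordal (Some 0) y < 1/4" and a: "cmod a \<ge> 10" and h2: "chordal (Some a) y < 1/4"
  shows False
proof (cases y)
  case None thus False using h1 by simp
next
  case (Some x)
  have sx: "sqrt (1 + (cmod x)^2) \<le> 1 + cmod x"
    by (rule real_le_lsqrt) (auto simp: power2_eq_square algebra_simps)
  have sx1: "sqrt (1 + (cmod x)^2) \<ge> 1" by simp
  have "cmod x / sqrt (1 + (cmod x)^2) < 1/4" using h1 Some by simp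
  moreover have "sqrt (1 + (cmod x)^2) > 0" using sx1 by linarith
  ultimately have "cmod x < 1/4 * sqrt (1 + (cmod x)^2)" using pos_divide_less_eq by blast
  hence x3: "cmod x < 1/3" using sx by linarith
  have sx2: "sqrt (1 + (cmod x)^2) \<le> 2" using sx x3 by linarith
  have sa: "sqrt (1 + (cmod a)^2) \<le> 1 + cmod a"
    by (rule real_le_lsqrt) (auto simp: power2_eq_square algebra_simps)
  have sa1: "sqrt (1 + (cmod a)^2) \<ge> 1" by simp
  have num: "cmod (a - x) \<ge> cmod a - cmod x" by (rule norm_triangle_ineq2)
  have den: "sqrt (1 + (cmod a)^2) * sqrt (1 + (cmod x)^2) \<le> (1 + cmod a) * 2"
    using sa sx2 sx1 by (intro mult_mono) auto
  have dpos: "sqrt (1 + (cmod a)^2) * sqrt (1 + (cmod x)^2) > 0" using sa1 sx1 by (intro mult_pos_pos) linarith+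
  have "(cmod a - cmod x) \<ge> ((1 + cmod a) * 2) / 4" using a x3 by (simp add: field_simps)
  hence "cmod (a - x) \<ge> (sqrt (1 + (cmod a)^2) * sqrt (1 + (cmod x)^2)) / 4" using num den by linarith
  hence "cmod (a - x) / (sqrt (1 + (cmod a)^2) * sqrt (1 + (cmod x)^2)) \<ge> 1/4"
    using dpos by (simp add: le_divide_eq)
  thus False using h2 Some by simp
qed

lemma Psi_real_lb:
  "cmod (Psi k (of_real y)) \<ge> \<bar>sin y\<bar> * exp (- cmod (bb (k div 2)))"
proof -
  define b where "b = bb (k div 2)"
  define s where "s = k div 2"
  have "cmod (b * of_real (sin y) ^ (2 * s)) = cmod b * \<bar>sin y\<bar> ^ (2 * s)"
    by (simp add: norm_mult norm_power)
  also have "\<dots> \<le> cmod b * 1"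
    by (intro mult_left_mono power_le_one) auto
  finally have c: "cmod (b * of_real (sin y) ^ (2 * s)) \<le> cmod b" by simp
  have "exp (- cmod b) \<le> exp (Re (b * of_real (sin y) ^ (2 * s)))"
    using c abs_Re_le_cmod[of "b * of_real (sin y) ^ (2 * s)"] by auto
  also have "\<dots> = cmod (exp (b * of_real (sin y) ^ (2 * s)))" by simp
  finally have e: "exp (- cmod b) \<le> cmod (exp (b * of_real (sin y) ^ (2 * s)))" .
  have "Psi k (of_real y) = of_real (sin y) * exp (b * of_real (sin y) ^ (2 * s))"
    by (simp add: Psi_def Ps_def b_def s_def sin_of_real)
  hence "cmod (Psi k (of_real y)) = \<bar>sin y\<bar> * cmod (exp (b * of_real (sin y) ^ (2 * s)))"
    by (simp add: norm_mult)
  thus ?thesis using e by (simp add: b_def[symmetric] mult_left_mono)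
qed

lemma f_hderiv:
  "(deriv ^^ k) (\<lambda>z. B * Psi k (of_nat n * z)) z = B * (of_nat n ^ k * (deriv ^^ k) (Psi k) (of_nat n * z))"
proof -
  have "(deriv ^^ k) (\<lambda>z. B * Psi k (of_nat n * z)) z = B * (deriv ^^ k) (\<lambda>z. Psi k (of_nat n * z)) z"
  proof (rule higher_deriv_cmult[of _ UNIV])
    show "(\<lambda>x. Psi k (of_nat n * x)) holomorphic_on UNIV"
      using holomorphic_on_compose[of "\<lambda>x. of_nat n * x" UNIV "Psi k"] Psi_holo
      by (auto simp: o_def intro: holomorphic_intros)
  qed auto
  also have "(deriv ^^ k) (\<lambda>z. Psi k (of_nat n * z)) z = of_nat n ^ k * (deriv ^^ k) (Psi k) (of_nat n * z)"
    by (rule higher_deriv_compose_linear[OF Psi_holo[of k UNIV] open_UNIV open_UNIV]) auto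
  finally show ?thesis .
qed

lemma num_bound:
  fixes X C \<alpha> B L P D :: real
  assumes X0: "X \<ge> 0" and C0: "C > 0" and a1: "\<alpha> > 1" and B1: "B \<ge> 1" and XB: "X \<le> C * B"
    and Y: "X * L powr (2 - \<alpha>) / C \<le> B powr (\<alpha> - 1)" and L1: "L \<ge> 1"
    and P0: "0 \<le> P" and PL: "P \<le> L" and D: "D \<le> X * B * P ^ 2"
  shows "D \<le> C * (1 + (B * P) powr \<alpha>)"
proof -
  define u where "u = B * P"
  have u0: "u \<ge> 0" using B1 P0 by (simp add: u_def)
  have DX: "D \<le> X * u ^ 2 / B"
  proof -
    have "X * B * P ^ 2 = X * u ^ 2 / B" using B1 unfolding u_def by (simp add: power2_eq_square)
    thus ?thesis using D by simp
  qed
  have up: "u powr \<alpha> \<ge> 0" by simp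
  have goal: "X * u ^ 2 / B \<le> C * (1 + u powr \<alpha>)"
  proof (cases "u \<le> 1")
    case True
    have "u ^ 2 \<le> 1" using True u0 by (simp add: power_le_one)
    hence "X * u ^ 2 \<le> X * 1" using X0 by (intro mult_left_mono) auto
    hence "X * u ^ 2 / B \<le> X / B" using B1 by (intro divide_right_mono) auto
    also have "X / B \<le> C" using XB B1 by (simp add: divide_le_eq mult.commute)
    also have "C \<le> C * (1 + u powr \<alpha>)" using C0 up by simp
    finally show ?thesis .
  next
    case False
    hence u1: "u > 1" by simp
    have usq: "u ^ 2 = u powr \<alpha> * u powr (2 - \<alpha>)"
    proof -
      have "u powr \<alpha> * u powr (2 - \<alpha>) = u powr 2" using u1 by (simp add: powr_add[symmetric])
      also have "u powr 2 = u ^ 2" using u1 by (simp add: powr_realpow)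
      finally show ?thesis by simp
    qed
    have key: "X * u powr (2 - \<alpha>) \<le> C * B"
    proof (cases "\<alpha> \<ge> 2")
      case True
      have "u powr (2 - \<alpha>) \<le> u powr 0" using True u1 by (intro powr_mono) auto
      hence "u powr (2 - \<alpha>) \<le> 1" using u1 by simp
      hence "X * u powr (2 - \<alpha>) \<le> X * 1" using X0 by (intro mult_left_mono) auto
      thus ?thesis using XB by simp
    next
      case False
      have uBL: "u \<le> B * L" using PL B1 by (simp add: u_def)
      have "u powr (2 - \<alpha>) \<le> (B * L) powr (2 - \<alpha>)" using False uBL u0 by (intro powr_mono2) auto
      also have "\<dots> = B powr (2 - \<alpha>) * L powr (2 - \<alpha>)" using B1 L1 using powr_mult[of B L "2 - \<alpha>"] by simp
      finally have 1: "X * u powr (2 - \<alpha>) \<le> X * (B powr (2 - \<alpha>) * L powr (2 - \<alpha>))"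
        using X0 by (intro mult_left_mono) auto
      have "X * L powr (2 - \<alpha>) \<le> C * B powr (\<alpha> - 1)" using Y C0 by (simp add: divide_le_eq mult.commute)
      hence 2: "X * L powr (2 - \<alpha>) * B powr (2 - \<alpha>) \<le> C * B powr (\<alpha> - 1) * B powr (2 - \<alpha>)"
        by (intro mult_right_mono) auto
      have 3: "C * B powr (\<alpha> - 1) * B powr (2 - \<alpha>) = C * B"
      proof -
        have "B powr (\<alpha> - 1) * B powr (2 - \<alpha>) = B powr 1" using B1 by (simp add: powr_add[symmetric])
        thus ?thesis using B1 by (simp add: mult.assoc)
      qed
      have "X * (B powr (2 - \<alpha>) * L powr (2 - \<alpha>)) = X * L powr (2 - \<alpha>) * B powr (2 - \<alpha>)"
        by (simp only: mult_ac)
      thus ?thesis using 1 2 3 by linarith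
    qed
    have "X * u ^ 2 / B = (X * u powr (2 - \<alpha>)) * u powr \<alpha> / B" by (simp only: usq mult_ac)
    also have "\<dots> \<le> (C * B) * u powr \<alpha> / B"
      using key up B1 by (intro divide_right_mono mult_right_mono) auto
    also have "\<dots> = C * u powr \<alpha>" using B1 by simp
    also have "\<dots> \<le> C * (1 + u powr \<alpha>)" using C0 by simp
    finally show ?thesis .
  qed
  show ?thesis using DX goal unfolding u_def by linarith
qed

lemma B_exists:
  fixes \<alpha> C Q :: real
  assumes k2: "k \<ge> 2" and a1: "\<alpha> > 1" and C0: "C > 0"
  shows "\<exists>B\<ge>Q. \<forall>z\<in>ball 0 2. cmod ((deriv ^^ k) (\<lambda>z. of_real B * Psi k (of_nat n * z)) z) /
            (1 + cmod (of_real B * Psi k (of_nat n * z)) powr \<alpha>) \<le> C"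
proof -
  obtain M where M0: "M \<ge> 0" and M: "\<And>w. cmod w \<le> 2 * real n \<Longrightarrow> cmod ((deriv ^^ k) (Psi k) w) \<le> M * cmod (Psi k w) ^ 2"
    using Psi_key[OF k2, of "2 * real n"] by auto
  have "bounded (Psi k ` cball 0 (2 * real n))"
    by (intro compact_imp_bounded compact_continuous_image holomorphic_on_imp_continuous_on Psi_holo) auto
  then obtain L0 where L0: "\<And>w. w \<in> cball 0 (2 * real n) \<Longrightarrow> cmod (Psi k w) \<le> L0"
    unfolding bounded_iff by blast
  define L where "L = max L0 1"
  have L1: "L \<ge> 1" and L: "\<And>w. cmod w \<le> 2 * real n \<Longrightarrow> cmod (Psi k w) \<le> L"
    using L0 by (auto simp: L_def intro: le_max_iff_disj[THEN iffD2])
  define X where "X = real n ^ k * M"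
  have X0: "X \<ge> 0" using M0 by (simp add: X_def)
  define Y where "Y = X * L powr (2 - \<alpha>) / C"
  have Y0: "Y \<ge> 0" using X0 C0 by (simp add: Y_def)
  define B where "B = max (max 1 Q) (max (X / C) (Y powr (1 / (\<alpha> - 1))))"
  have B1: "B \<ge> 1" and BQ: "B \<ge> Q" by (auto simp: B_def)
  have XB: "X \<le> C * B"
  proof -
    have "X / C \<le> B" by (simp add: B_def)
    thus ?thesis using C0 by (simp add: divide_le_eq mult.commute)
  qed
  have YB: "Y \<le> B powr (\<alpha> - 1)"
  proof -
    have "Y powr (1 / (\<alpha> - 1)) \<le> B" by (simp add: B_def)
    hence "(Y powr (1 / (\<alpha> - 1))) powr (\<alpha> - 1) \<le> B powr (\<alpha> - 1)"
      using a1 by (intro powr_mono2) auto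
    also have "(Y powr (1 / (\<alpha> - 1))) powr (\<alpha> - 1) = Y"
      using a1 Y0 by (simp add: powr_powr)
    finally show ?thesis .
  qed
  have "\<forall>z\<in>ball 0 2. cmod ((deriv ^^ k) (\<lambda>z. of_real B * Psi k (of_nat n * z)) z) /
            (1 + cmod (of_real B * Psi k (of_nat n * z)) powr \<alpha>) \<le> C"
  proof
    fix z :: complex assume z: "z \<in> ball 0 2"
    define w where "w = of_nat n * z"
    have wn: "cmod w \<le> 2 * real n"
      using z by (simp add: w_def norm_mult mult_left_mono less_imp_le mult.commute)
    define P where "P = cmod (Psi k w)"
    define D where "D = cmod ((deriv ^^ k) (\<lambda>z. of_real B * Psi k (of_nat n * z)) z)"
    have "D = B * (real n ^ k * cmod ((deriv ^^ k) (Psi k) w))"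
      using B1 by (simp add: D_def f_hderiv w_def norm_mult norm_power)
    also have "\<dots> \<le> B * (real n ^ k * (M * P ^ 2))"
      using M[OF wn] B1 by (simp add: P_def mult_left_mono)
    finally have D: "D \<le> X * B * P ^ 2" by (simp add: X_def algebra_simps)
    have "D \<le> C * (1 + (B * P) powr \<alpha>)"
      by (rule num_bound[OF X0 C0 a1 B1 XB _ L1 _ _ D]) (use YB L[OF wn] in \<open>auto simp: Y_def P_def\<close>)
    moreover have "cmod (of_real B * Psi k (of_nat n * z)) = B * P"
      using B1 by (simp add: P_def w_def norm_mult)
    moreover have "1 + (B * P) powr \<alpha> > 0" by (simp add: add_pos_nonneg)
    ultimately show "cmod ((deriv ^^ k) (\<lambda>z. of_real B * Psi k (of_nat n * z)) z) /
            (1 + cmod (of_real B * Psi k (of_nat n * z)) powr \<alpha>) \<le> C"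
      by (simp add: D_def divide_le_eq mult.commute)
  qed
  thus ?thesis using BQ by blast
qed

lemma sin_shift_cos: "sin (2 * pi * of_int j + pi / 2 + \<theta>) = cos \<theta>"
proof -
  have "sin (2 * pi * of_int j + pi / 2 + \<theta>) = sin (2 * pi * of_int j + (pi / 2 + \<theta>))"
    by (simp add: add.assoc)
  also have "\<dots> = sin (pi / 2 + \<theta>)" by (simp add: sin_add)
  also have "\<dots> = cos \<theta>" by (simp add: sin_add)
  finally show ?thesis .
qed

lemma cos_ge_half: assumes "\<bar>\<theta>\<bar> \<le> pi / 3" shows "cos \<theta> \<ge> 1/2"
proof -
  have "cos (pi / 3) \<le> cos \<bar>\<theta>\<bar>" using assms by (intro cos_monotone_0_pi_le) auto
  thus ?thesis by (simp add: cos_60)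
qed

theorem mainTheorem2:
  fixes k :: nat and \<alpha> C :: real
  assumes "k \<ge> 2" and "\<alpha> > 1" and "C > 0"
  shows "\<exists>f :: nat \<Rightarrow> complex \<Rightarrow> complex.
           (\<forall>n. f n holomorphic_on ball 0 2) \<and>
           (\<forall>n. \<forall>z\<in>ball 0 2.
              cmod ((deriv ^^ k) (f n) z) / (1 + cmod (f n z) powr \<alpha>) \<le> C) \<and>
           \<not> quasi_normal (range f) (ball 0 2)"
proof -
  define Eb where "Eb = exp (cmod (bb (k div 2)))"
  have "\<forall>n. \<exists>B\<ge>20 * Eb. \<forall>z\<in>ball 0 2. cmod ((deriv ^^ k) (\<lambda>z. of_real B * Psi k (of_nat n * z)) z) /
            (1 + cmod (of_real B * Psi k (of_nat n * z)) powr \<alpha>) \<le> C"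
    using B_exists[OF assms] by blast
  then obtain Bf where BQ: "\<And>n. Bf n \<ge> 20 * Eb" and Bb: "\<And>n. \<forall>z\<in>ball 0 2. cmod ((deriv ^^ k) (\<lambda>z. of_real (Bf n) * Psi k (of_nat n * z)) z) /
            (1 + cmod (of_real (Bf n) * Psi k (of_nat n * z)) powr \<alpha>) \<le> C"
    by metis
  define f where "f = (\<lambda>n z. of_real (Bf n) * Psi k (of_nat n * z))"
  have holo: "\<forall>n. f n holomorphic_on ball 0 2"
  proof
    fix n
    show "f n holomorphic_on ball 0 2"
      using holomorphic_on_compose[of "\<lambda>x. of_nat n * x" "ball 0 2" "Psi k"] Psi_holo
      by (auto simp: o_def f_def intro!: holomorphic_intros)
  qed
  have bnd: "\<forall>n. \<forall>z\<in>ball 0 2. cmod ((deriv ^^ k) (f n) z) / (1 + cmod (f n z) powr \<alpha>) \<le> C"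
    using Bb by (simp add: f_def)
  have nqn: "\<not> quasi_normal (range f) (ball 0 2)"
  proof
    assume qn: "quasi_normal (range f) (ball 0 2)"
    have "\<forall>n. f n \<in> range f" by simp
    with qn have "\<exists>r E h. strict_mono r \<and> (\<forall>z\<in>ball 0 2. \<not> z islimpt E) \<and>
           sph_loc_unif_conv (\<lambda>n z. Some (f (r n) z)) h (ball 0 2 - E)"
      unfolding quasi_normal_def by blast
    then obtain r E h where r: "strict_mono r" and E: "\<forall>z\<in>ball 0 2. \<not> z islimpt E"
      and conv: "sph_loc_unif_conv (\<lambda>n z. Some (f (r n) z)) h (ball 0 2 - E)"
        by blast
    define Sg where "Sg = (\<lambda>x. complex_of_real x) ` {1/4..3/4}"
    have cSg: "compact Sg" unfolding Sg_def
      by (intro compact_continuous_image continuous_intros) auto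
    have SgD: "Sg \<subseteq> ball 0 2" by (auto simp: Sg_def)
    have fin: "finite (E \<inter> Sg)"
    proof (rule ccontr)
      assume "infinite (E \<inter> Sg)"
      then obtain x where "x \<in> Sg" "x islimpt (E \<inter> Sg)"
        using cSg unfolding compact_eq_Bolzano_Weierstrass by blast
      hence "x islimpt E" "x \<in> ball 0 2" using SgD by (auto intro: islimpt_subset)
      thus False using E by blast
    qed
    have "infinite Sg" unfolding Sg_def
      by (subst finite_image_iff) (auto simp: inj_on_def)
    have "Sg - E \<noteq> {}"
    proof
      assume "Sg - E = {}"
      hence "Sg = E \<inter> Sg" by blast
      thus False using fin \<open>infinite Sg\<close> by simp
    qed
    then obtain y where "y \<in> Sg" "y \<notin> E" by blast
    then obtain x0 where x0: "x0 \<in> {1/4..3/4}" and x0E: "complex_of_real x0 \<notin> E"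
      unfolding Sg_def by blast
    define p where "p = complex_of_real x0"
    have "\<not> p islimpt E" using E x0 by (auto simp: p_def)
    then obtain T where T: "p \<in> T" "open T" "\<And>y. y \<in> E \<Longrightarrow> y \<in> T \<Longrightarrow> y = p"
      unfolding islimpt_def by auto
    then obtain \<rho>0 where \<rho>0: "\<rho>0 > 0" "ball p \<rho>0 \<subseteq> T" using open_contains_ball by blast
    define \<rho> where "\<rho> = min \<rho>0 1"
    have r0: "\<rho> > 0" "\<rho> \<le> 1" using \<rho>0 by (auto simp: \<rho>_def)
    define K where "K = cball p (\<rho> / 2)"
    have KD: "K \<subseteq> ball 0 2 - E"
    proof
      fix z assume z: "z \<in> K"
      hence zb: "z \<in> ball p \<rho>0" using r0 by (auto simp: K_def \<rho>_def)
      have "cmod z \<le> cmod p + dist p z" by (metis dist_0_norm dist_triangle)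
      also have "cmod p \<le> 3/4" using x0 by (simp add: p_def)
      finally have "cmod z < 2" using z r0 by (auto simp: K_def)
      moreover have "z \<notin> E" using T(3)[of z] zb \<rho>0 x0E p_def by auto
      ultimately show "z \<in> ball 0 2 - E" by simp
    qed
    have "compact K" by (simp add: K_def)
    hence all: "\<forall>e>0. \<forall>\<^sub>F n in sequentially. \<forall>z\<in>K. chordal (Some (f (r n) z)) (h z) < e"
      using conv KD unfolding sph_loc_unif_conv_def by blast
    have q: "(1/4::real) > 0" by simp
    have "\<forall>\<^sub>F n in sequentially. \<forall>z\<in>K. chordal (Some (f (r n) z)) (h z) < 1/4"
      by (rule all[rule_format, OF q])
    then obtain N where N: "\<And>n. n \<ge> N \<Longrightarrow> \<forall>z\<in>K. chordal (Some (f (r n) z)) (h z) < 1/4"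
      unfolding eventually_sequentially by blast
    define N1 where "N1 = max N (nat \<lceil>8 * pi / \<rho>\<rceil>)"
    define m where "m = r N1"
    have mN1: "N1 \<le> m" unfolding m_def using seq_suble[OF r] by blast
    have m8: "real m \<ge> 8 * pi / \<rho>"
    proof -
      have "8 * pi / \<rho> \<le> real (nat \<lceil>8 * pi / \<rho>\<rceil>)" by linarith
      also have "\<dots> \<le> real m" using mN1 by (simp add: N1_def)
      finally show ?thesis .
    qed
    have mpos: "real m > 0"
    proof -
      have "8 * pi / \<rho> > 0" using r0 by simp
      thus ?thesis using m8 by linarith
    qed
    define j :: int where "j = \<lfloor>real m * x0 / (2 * pi)\<rfloor>"
    define xs where "xs = (2 * pi * of_int j + pi / 2) / real m"
    have j1: "of_int j \<le> real m * x0 / (2 * pi)" "real m * x0 / (2 * pi) < of_int j + 1"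
      unfolding j_def by linarith+
    have xs1: "\<bar>xs - x0\<bar> \<le> \<rho> / 4"
    proof -
      have a: "2 * pi * of_int j \<le> real m * x0" using j1(1) by (simp add: field_simps)
      have b: "real m * x0 < 2 * pi * of_int j + 2 * pi" using j1(2) by (simp add: field_simps)
      have "\<bar>(2 * pi * of_int j + pi / 2) - real m * x0\<bar> \<le> 2 * pi" using a b pi_gt_zero by linarith
      hence "\<bar>xs - x0\<bar> \<le> 2 * pi / real m" using mpos
        by (simp add: xs_def field_simps abs_div_pos[symmetric] abs_mult)
      also have "2 * pi / real m \<le> \<rho> / 4"
        using m8 r0 mpos pi_gt_zero by (simp add: field_simps)
      finally show ?thesis .
    qed
    define N2 where "N2 = max N (3 * m)"
    define nn where "nn = r N2"
    have nnN2: "N2 \<le> nn" unfolding nn_def using seq_suble[OF r] by blast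
    have nn3: "real nn \<ge> 3 * real m" using nnN2 by (simp add: N2_def)
    have nnpos: "real nn > 0" using nn3 mpos by linarith
    define i :: int where "i = \<lfloor>real nn * xs / pi\<rfloor>"
    define w where "w = of_int i * pi / real nn"
    have wxs: "0 \<le> xs - w" "xs - w \<le> pi / real nn"
    proof -
      have i1: "of_int i \<le> real nn * xs / pi" "real nn * xs / pi < of_int i + 1"
        unfolding i_def by linarith+
      have "of_int i * pi \<le> real nn * xs" using i1(1) pi_gt_zero by (simp add: field_simps)
      have eq: "xs - w = (real nn * xs - of_int i * pi) / real nn" using nnpos by (simp add: w_def field_simps)
      show "0 \<le> xs - w" unfolding eq using nnpos \<open>of_int i * pi \<le> real nn * xs\<close> by simp
      have "real nn * xs < of_int i * pi + pi" using i1(2) pi_gt_zero by (simp add: field_simps)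
      hence "real nn * xs - of_int i * pi \<le> pi" by simp
      thus "xs - w \<le> pi / real nn" unfolding eq using nnpos by (simp add: divide_right_mono)
    qed
    have pinn: "pi / real nn \<le> \<rho> / 4"
    proof -
      have "real nn \<ge> 24 * pi / \<rho>" using nn3 m8 by linarith
      hence "pi * 24 \<le> \<rho> * real nn" using r0 by (simp add: field_simps)
      hence "pi * 4 \<le> \<rho> * real nn" using pi_gt_zero by linarith
      thus ?thesis using r0 nnpos by (simp add: field_simps)
    qed
    have wK: "complex_of_real w \<in> K"
    proof -
      have "\<bar>w - x0\<bar> \<le> \<rho> / 2" using xs1 wxs pinn by linarith
      thus ?thesis by (simp add: K_def p_def dist_norm norm_of_real[symmetric] abs_minus_commute flip: of_real_diff)
    qed
    have f0: "f nn (complex_of_real w) = 0"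
    proof -
      have "of_nat nn * complex_of_real w = of_real (of_int i * pi)"
        using nnpos by (simp add: w_def field_simps)
      thus ?thesis by (simp add: f_def Psi_zero_iff)
    qed
    have fbig: "cmod (f m (complex_of_real w)) \<ge> 10"
    proof -
      have "real m * w = 2 * pi * of_int j + pi / 2 + (real m * (w - xs))"
        using mpos by (simp add: xs_def field_simps)
      hence sw: "sin (real m * w) = cos (real m * (w - xs))" by (simp add: sin_shift_cos)
      have "\<bar>real m * (w - xs)\<bar> = real m * (xs - w)" using wxs mpos by (simp add: abs_mult)
      also have "\<dots> \<le> real m * (pi / real nn)" using wxs mpos by (intro mult_left_mono) auto
      also have "\<dots> \<le> pi / 3" using nn3 mpos nnpos pi_gt_zero by (simp add: field_simps)
      finally have "sin (real m * w) \<ge> 1/2" using sw cos_ge_half by simp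
      hence "\<bar>sin (real m * w)\<bar> \<ge> 1/2" by simp
      hence "\<bar>sin (real m * w)\<bar> * exp (- cmod (bb (k div 2))) \<ge> 1/2 * exp (- cmod (bb (k div 2)))"
        by (intro mult_right_mono) auto
      hence lb: "cmod (Psi k (of_real (real m * w))) \<ge> 1/2 * exp (- cmod (bb (k div 2)))"
        using Psi_real_lb[of "real m * w" k] by linarith
      have Bm0: "Bf m \<ge> 0" using BQ[of m] by (simp add: Eb_def) (smt (verit) exp_gt_zero)
      have "of_nat m * complex_of_real w = of_real (real m * w)" by simp
      hence "cmod (f m (complex_of_real w)) = Bf m * cmod (Psi k (of_real (real m * w)))"
        using Bm0 by (simp add: f_def norm_mult)
      also have "\<dots> \<ge> Bf m * (1/2 * exp (- cmod (bb (k div 2))))"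
        using lb Bm0 by (intro mult_left_mono)
      finally have "cmod (f m (complex_of_real w)) \<ge> Bf m * (1/2 * exp (- cmod (bb (k div 2))))" .
      also have "Bf m * (1/2 * exp (- cmod (bb (k div 2)))) \<ge> 20 * Eb * (1/2 * exp (- cmod (bb (k div 2))))"
        using BQ[of m] by (intro mult_right_mono) auto
      also have "20 * Eb * (1/2 * exp (- cmod (bb (k div 2)))) = 10"
        by (simp add: Eb_def exp_minus field_simps)
      finally show ?thesis by simp
    qed
    have "chordal (Some (f (r N2) (complex_of_real w))) (h (complex_of_real w)) < 1/4"
      using N[of N2] wK by (simp add: N2_def)
    hence c1: "chordal (Some 0) (h (complex_of_real w)) < 1/4" using f0 by (simp add: nn_def)
    have "chordal (Some (f (r N1) (complex_of_real w))) (h (complex_of_real w)) < 1/4"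
      using N[of N1] wK by (simp add: N1_def)
    hence c2: "chordal (Some (f m (complex_of_real w))) (h (complex_of_real w)) < 1/4" by (simp add: m_def)
    show False by (rule chordal_contra[OF c1 fbig c2])
  qed
  show ?thesis using holo bnd nqn by blast
qed

end
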